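(* Let $F$ be an $N=(2,2)$ full vertex operator superalgebra with $c,\bar c\ne0$ and $d=G^+_{-1/2}+\bar G^+_{-1/2}$. Let $r,s\in\mathbb R$ and let $v=\sum_{(p,q)}v_{(p,q)}$ be a nonzero finite sum with $v_{(p,q)}\in F^{(p,q)}_{r+\frac p2,\,s+\frac q2}$. If $dv=0$ and $(r,s)\ne(0,0)$, then $v\in\mathrm{Im}\,d$.
   Context: A full vertex operator superalgebra is $F=\bigoplus_{(h,\bar h)\in\mathbb R^2}F_{h,\bar h}$ with $F_{0,0}=\mathbb C\mathbf 1$, $F_{h,\bar h}=0$ unless $h-\bar h\in\frac12\mathbb Z$, $\sum_{h+\bar h<K}\dim F_{h,\bar h}<\infty$, bounded below bigrading; parity $|a|=2(h-\bar h)\bmod 2$; even full vertex operator $Y(a,\underline z)=\sum_{r,s\in\mathbb R}a(r,s)z^{-r-1}\bar z^{-s-1}$ with vacuum $\mathbf 1$ satisfying Moriwaki's axioms (vacuum axioms; matrix coefficients of $Y(a,\underline z_1)Y(b,\underline z_2)c$, $Y(Y(a,\underline z_1-\underline z_2)b,\underline z_2)c$, $(-1)^{|a||b|}Y(b,\underline z_2)Y(a,\underline z_1)c$ converge in the respective domains to one real-analytic function on $\{z_1\ne z_2,z_1z_2\ne0\}$); conformal vectors $\omega\in F_{2,0},\bar\omega\in F_{0,2}$ with commuting Virasoro modes $L(n)=\omega(n+1,-1)$, $\bar L(n)=\bar\omega(-1,n+1)$ of central charges $c,\bar c$, $L(0),\bar L(0)$ acting on $F_{h,\bar h}$ by $h,\bar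 h$. An $N=(2,2)$ structure: holomorphic $\tau^\pm\in F_{3/2,0}$, $J\in F_{1,0}$ and antiholomorphic $\bar\tau^\pm\in F_{0,3/2},\bar J\in F_{0,1}$ with modes $G^\pm_r,J_n$ and $\bar G^\pm_r,\bar J_n$ ($Y(\tau^\pm,\underline z)=\sum_{r\in\frac12+\mathbb Z}G^\pm_rz^{-r-3/2}$, $Y(J,\underline z)=\sum J_nz^{-n-1}$, barred in $\bar z$) satisfying two supercommuting copies of the $N=2$ Neveu–Schwarz relations ($[J_m,J_n]=\frac c3m\delta_{m+n,0}$, $[J_m,G^\pm_r]=\pm G^\pm_{m+r}$, $[L_m,G^\pm_r]=(\frac m2-r)G^\pm_{m+r}$, $[L_m,J_n]=-nJ_{m+n}$, $[G^\pm_r,G^\pm_s]_+=0$, $[G^+_r,G^-_s]_+=L_{r+s}+\frac12(r-s)J_{r+s}+\frac c6(r^2-\frac14)\delta_{r+s,0}$; barred with $\bar c$), $J_0,\bar J_0$ semisimple with real eigenvalues, $J_0-\bar J_0$ integral and $\exp(\pi i(J_0-\bar J_0))$ the parity operator. $F^{(p,q)}_{h,\bar h}=\{v\in F_{h,\bar h}:J_0v=pv,\ \bar J_0v=qv\}$. *)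

theory Defs
  imports "HOL-Analysis.Analysis"
begin

class cvs = ab_group_add +
  fixes cscale :: "complex \<Rightarrow> 'a \<Rightarrow> 'a"  (infixr \<open>*\<^sub>C\<close> 75)
  assumes cscale_add_right: "a *\<^sub>C (x + y) = a *\<^sub>C x + a *\<^sub>C y"
      and cscale_add_left: "(a + b) *\<^sub>C x = a *\<^sub>C x + b *\<^sub>C x"
      and cscale_cscale: "a *\<^sub>C (b *\<^sub>C x) = (a * b) *\<^sub>C x"
      and cscale_one: "1 *\<^sub>C x = x"

definition clin :: "('a::cvs \<Rightarrow> 'b::cvs) \<Rightarrow> bool" where
  "clin f \<longleftrightarrow> (\<forall>x y. f (x + y) = f x + f y) \<and> (\<forall>a x. f (a *\<^sub>C x) = a *\<^sub>C f x)"

definition csubspace :: "'a::cvs set \<Rightarrow> bool" where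
  "csubspace S \<longleftrightarrow> 0 \<in> S \<and> (\<forall>x\<in>S. \<forall>y\<in>S. x + y \<in> S) \<and> (\<forall>a. \<forall>x\<in>S. a *\<^sub>C x \<in> S)"

definition cfin_dim :: "'a::cvs set \<Rightarrow> bool" where
  "cfin_dim S \<longleftrightarrow> (\<exists>B. finite B \<and> B \<subseteq> S \<and> (\<forall>x\<in>S. \<exists>f. x = (\<Sum>b\<in>B. f b *\<^sub>C b)))"

text \<open>Fh h hb is the homogeneous subspace F_{h,hb}; F is their direct sum.\<close>

definition bigraded :: "(real \<Rightarrow> real \<Rightarrow> 'v::cvs set) \<Rightarrow> bool" where
  "bigraded Fh \<longleftrightarrow>
     (\<forall>h hb. csubspace (Fh h hb)) \<and>
     (\<forall>v. \<exists>!comp :: real \<times> real \<Rightarrow> 'v.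
           finite {k. comp k \<noteq> 0} \<and> (\<forall>k. comp k \<in> Fh (fst k) (snd k)) \<and>
           v = (\<Sum>k\<in>{k. comp k \<noteq> 0}. comp k))"

definition par :: "real \<Rightarrow> real \<Rightarrow> nat" where
  "par h hb = nat (\<lfloor>2 * (h - hb)\<rfloor> mod 2)"

text \<open>z^r zbar^s for r - s integral: |z|^(2s) z^(r-s)\<close>
definition zz :: "complex \<Rightarrow> real \<Rightarrow> real \<Rightarrow> complex" where
  "zz z r s = complex_of_real (cmod z powr (2 * s)) * z powi \<lfloor>r - s\<rfloor>"

definition real_analytic2 :: "(complex \<times> complex \<Rightarrow> complex) \<Rightarrow> (complex \<times> complex) set \<Rightarrow> bool" where
  "real_analytic2 f U \<longleftrightarrow>
     (\<forall>p\<in>U. \<exists>e>0. \<exists>c :: nat \<times> nat \<times> nat \<times> nat \<Rightarrow> complex.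
        \<forall>z1 z2. cmod (z1 - fst p) < e \<and> cmod (z2 - snd p) < e \<longrightarrow>
          (let t = (\<lambda>(n1, m1, n2, m2). c (n1, m1, n2, m2) * (z1 - fst p) ^ n1 * cnj (z1 - fst p) ^ m1
                        * (z2 - snd p) ^ n2 * cnj (z2 - snd p) ^ m2)
           in t summable_on UNIV \<and> f (z1, z2) = infsum t UNIV))"

definition restricted_dual :: "(real \<Rightarrow> real \<Rightarrow> 'v::cvs set) \<Rightarrow> ('v \<Rightarrow> complex) set" where
  "restricted_dual Fh = {u. (\<forall>x y. u (x + y) = u x + u y) \<and> (\<forall>a x. u (a *\<^sub>C x) = a * u x) \<and>
      (\<exists>S. finite S \<and> (\<forall>h hb x. (h, hb) \<notin> S \<and> x \<in> Fh h hb \<longrightarrow> u x = 0))}"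

text \<open>md a r s b = a(r,s) b, the modes of the full vertex operator Y(a,z) =
  sum a(r,s) z^(-r-1) zbar^(-s-1).\<close>

definition full_VOSA ::
  "(real \<Rightarrow> real \<Rightarrow> 'v::cvs set) \<Rightarrow> ('v \<Rightarrow> real \<Rightarrow> real \<Rightarrow> 'v \<Rightarrow> 'v) \<Rightarrow> 'v \<Rightarrow> bool" where
  "full_VOSA Fh md vac \<longleftrightarrow>
     bigraded Fh \<and>
     Fh 0 0 = {a *\<^sub>C vac | a. True} \<and>
     (\<forall>h hb. Fh h hb \<noteq> {0} \<longrightarrow> 2 * (h - hb) \<in> \<int>) \<and>
     (\<forall>K. finite {(h, hb). h + hb < K \<and> Fh h hb \<noteq> {0}}) \<and>
     (\<forall>h hb. cfin_dim (Fh h hb)) \<and>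
     (\<exists>N. \<forall>h hb. Fh h hb \<noteq> {0} \<longrightarrow> N \<le> h \<and> N \<le> hb) \<and>
     \<comment> \<open>bilinearity of modes\<close>
     (\<forall>r s b. clin (\<lambda>a. md a r s b)) \<and> (\<forall>a r s. clin (md a r s)) \<and>
     \<comment> \<open>compatibility with the bigrading, and evenness of Y\<close>
     (\<forall>h hb h' hb' a b r s. a \<in> Fh h hb \<and> b \<in> Fh h' hb' \<longrightarrow>
          md a r s b \<in> Fh (h + h' - r - 1) (hb + hb' - s - 1) \<and>
          (r - s \<notin> \<int> \<longrightarrow> md a r s b = 0)) \<and>
     \<comment> \<open>vacuum axioms\<close>
     (\<forall>r s b. md vac r s b = (if r = -1 \<and> s = -1 then b else 0)) \<and>
     (\<forall>a r s. \<not> (r \<in> \<int> \<and> s \<in> \<int> \<and> r < 0 \<and> s < 0) \<longrightarrow> md a r s vac = 0) \<and>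
     (\<forall>a. md a (-1) (-1) vac = a) \<and>
     \<comment> \<open>convergence and equality of the three matrix coefficients\<close>
     (\<forall>h hb h' hb' a b c u. a \<in> Fh h hb \<and> b \<in> Fh h' hb' \<and> u \<in> restricted_dual Fh \<longrightarrow>
        (\<exists>f. real_analytic2 f {(z1, z2). z1 \<noteq> 0 \<and> z2 \<noteq> 0 \<and> z1 \<noteq> z2} \<and>
          (\<forall>z1 z2. cmod z1 > cmod z2 \<and> cmod z2 > 0 \<longrightarrow>
             (let t = (\<lambda>(r, s, r', s'). u (md a r s (md b r' s' c))
                          * zz z1 (-r-1) (-s-1) * zz z2 (-r'-1) (-s'-1))
              in t summable_on UNIV \<and> f (z1, z2) = infsum t UNIV)) \<and>
          (\<forall>z1 z2. cmod z2 > cmod (z1 - z2) \<and> cmod (z1 - z2) > 0 \<longrightarrow>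
             (let t = (\<lambda>(r, s, r', s'). u (md (md a r s b) r' s' c)
                          * zz (z1 - z2) (-r-1) (-s-1) * zz z2 (-r'-1) (-s'-1))
              in t summable_on UNIV \<and> f (z1, z2) = infsum t UNIV)) \<and>
          (\<forall>z1 z2. cmod z2 > cmod z1 \<and> cmod z1 > 0 \<longrightarrow>
             (let t = (\<lambda>(r, s, r', s'). (-1) ^ (par h hb * par h' hb') * u (md b r' s' (md a r s c))
                          * zz z1 (-r-1) (-s-1) * zz z2 (-r'-1) (-s'-1))
              in t summable_on UNIV \<and> f (z1, z2) = infsum t UNIV))))"

definition opcomm :: "('v::cvs \<Rightarrow> 'v) \<Rightarrow> ('v \<Rightarrow> 'v) \<Rightarrow> 'v \<Rightarrow> 'v" where
  "opcomm A B = (\<lambda>x. A (B x) - B (A x))"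

definition opacomm :: "('v::cvs \<Rightarrow> 'v) \<Rightarrow> ('v \<Rightarrow> 'v) \<Rightarrow> 'v \<Rightarrow> 'v" where
  "opacomm A B = (\<lambda>x. A (B x) + B (A x))"

definition half_int :: "real \<Rightarrow> bool" where
  "half_int r \<longleftrightarrow> r - 1/2 \<in> \<int>"

text \<open>N=2 Neveu-Schwarz relations for modes L n, J n, Gp r, Gm r with central charge c
  (integer indices m, n and half-odd-integer indices r, s are given as reals).\<close>
definition N2_NS :: "complex \<Rightarrow> (real \<Rightarrow> 'v::cvs \<Rightarrow> 'v) \<Rightarrow> (real \<Rightarrow> 'v \<Rightarrow> 'v) \<Rightarrow>
     (real \<Rightarrow> 'v \<Rightarrow> 'v) \<Rightarrow> (real \<Rightarrow> 'v \<Rightarrow> 'v) \<Rightarrow> bool" where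
  "N2_NS c L J Gp Gm \<longleftrightarrow>
     (\<forall>m\<in>\<int>. \<forall>n\<in>\<int>. opcomm (J m) (J n) =
         (\<lambda>x. (if m + n = 0 then c / 3 * complex_of_real m else 0) *\<^sub>C x)) \<and>
     (\<forall>m\<in>\<int>. \<forall>r. half_int r \<longrightarrow>
         opcomm (J m) (Gp r) = Gp (m + r) \<and> opcomm (J m) (Gm r) = (\<lambda>x. - Gm (m + r) x)) \<and>
     (\<forall>m\<in>\<int>. \<forall>r. half_int r \<longrightarrow>
         opcomm (L m) (Gp r) = (\<lambda>x. complex_of_real (m/2 - r) *\<^sub>C Gp (m + r) x) \<and>
         opcomm (L m) (Gm r) = (\<lambda>x. complex_of_real (m/2 - r) *\<^sub>C Gm (m + r) x)) \<and>
     (\<forall>m\<in>\<int>. \<forall>n\<in>\<int>. opcomm (L m) (J n) = (\<lambda>x. complex_of_real (- n) *\<^sub>C J (m + n) x)) \<and>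
     (\<forall>r s. half_int r \<and> half_int s \<longrightarrow>
         opacomm (Gp r) (Gp s) = (\<lambda>x. 0) \<and> opacomm (Gm r) (Gm s) = (\<lambda>x. 0) \<and>
         opacomm (Gp r) (Gm s) = (\<lambda>x. L (r + s) x + complex_of_real ((r - s) / 2) *\<^sub>C J (r + s) x
            + ((if r + s = 0 then c / 6 * complex_of_real (r\<^sup>2 - 1/4) else 0) *\<^sub>C x)))"

definition virasoro :: "complex \<Rightarrow> (real \<Rightarrow> 'v::cvs \<Rightarrow> 'v) \<Rightarrow> bool" where
  "virasoro c L \<longleftrightarrow> (\<forall>m\<in>\<int>. \<forall>n\<in>\<int>. opcomm (L m) (L n) =
      (\<lambda>x. complex_of_real (m - n) *\<^sub>C L (m + n) x
         + (if m + n = 0 then c / 12 * complex_of_real (m ^ 3 - m) else 0) *\<^sub>C x))"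

definition Fpq :: "(real \<Rightarrow> real \<Rightarrow> 'v::cvs set) \<Rightarrow> (real \<Rightarrow> 'v \<Rightarrow> 'v) \<Rightarrow> (real \<Rightarrow> 'v \<Rightarrow> 'v)
      \<Rightarrow> real \<Rightarrow> real \<Rightarrow> real \<Rightarrow> real \<Rightarrow> 'v set" where
  "Fpq Fh J Jb p q h hb = {v \<in> Fh h hb. J 0 v = complex_of_real p *\<^sub>C v \<and> Jb 0 v = complex_of_real q *\<^sub>C v}"

definition semisimple_real :: "('v::cvs \<Rightarrow> 'v) \<Rightarrow> bool" where
  "semisimple_real A \<longleftrightarrow> (\<forall>v. \<exists>P :: real set. \<exists>w. finite P \<and>
      (\<forall>p\<in>P. A (w p) = complex_of_real p *\<^sub>C w p) \<and> v = (\<Sum>p\<in>P. w p))"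

text \<open>Modes:
  L(n) = omega(n+1,-1), Lbar(n) = omegabar(-1,n+1), G^pm_r = tau^pm(r+1/2,-1), J_n = J(n,-1),
  Gbar^pm_r = taubar^pm(-1,r+1/2), Jbar_n = Jbar(-1,n).\<close>
definition N22_FVOSA ::
  "(real \<Rightarrow> real \<Rightarrow> 'v::cvs set) \<Rightarrow> ('v \<Rightarrow> real \<Rightarrow> real \<Rightarrow> 'v \<Rightarrow> 'v) \<Rightarrow> 'v \<Rightarrow>
   'v \<Rightarrow> 'v \<Rightarrow> complex \<Rightarrow> complex \<Rightarrow> 'v \<Rightarrow> 'v \<Rightarrow> 'v \<Rightarrow> 'v \<Rightarrow> 'v \<Rightarrow> 'v \<Rightarrow> bool" where
  "N22_FVOSA Fh md vac \<omega> \<omega>b c cb \<tau>p \<tau>m j \<tau>bp \<tau>bm jb \<longleftrightarrow>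
     (let L = (\<lambda>n. md \<omega> (n + 1) (-1)); Lb = (\<lambda>n. md \<omega>b (-1) (n + 1));
          Gp = (\<lambda>r. md \<tau>p (r + 1/2) (-1)); Gm = (\<lambda>r. md \<tau>m (r + 1/2) (-1));
          J = (\<lambda>n. md j n (-1));
          Gbp = (\<lambda>r. md \<tau>bp (-1) (r + 1/2)); Gbm = (\<lambda>r. md \<tau>bm (-1) (r + 1/2));
          Jb = (\<lambda>n. md jb (-1) n)
      in full_VOSA Fh md vac \<and>
         \<comment> \<open>conformal vectors\<close>
         \<omega> \<in> Fh 2 0 \<and> \<omega>b \<in> Fh 0 2 \<and>
         virasoro c L \<and> virasoro cb Lb \<and>
         (\<forall>m\<in>\<int>. \<forall>n\<in>\<int>. opcomm (L m) (Lb n) = (\<lambda>x. 0)) \<and>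
         (\<forall>h hb v. v \<in> Fh h hb \<longrightarrow> L 0 v = complex_of_real h *\<^sub>C v \<and> Lb 0 v = complex_of_real hb *\<^sub>C v) \<and>
         \<comment> \<open>holomorphic / antiholomorphic generators\<close>
         \<tau>p \<in> Fh (3/2) 0 \<and> \<tau>m \<in> Fh (3/2) 0 \<and> j \<in> Fh 1 0 \<and>
         \<tau>bp \<in> Fh 0 (3/2) \<and> \<tau>bm \<in> Fh 0 (3/2) \<and> jb \<in> Fh 0 1 \<and>
         (\<forall>a\<in>{\<tau>p, \<tau>m, j}. \<forall>r s. s \<noteq> -1 \<longrightarrow> md a r s = (\<lambda>x. 0)) \<and>
         (\<forall>a\<in>{\<tau>bp, \<tau>bm, jb}. \<forall>r s. r \<noteq> -1 \<longrightarrow> md a r s = (\<lambda>x. 0)) \<and>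
         \<comment> \<open>two N=2 NS algebras\<close>
         N2_NS c L J Gp Gm \<and> N2_NS cb Lb Jb Gbp Gbm \<and>
         \<comment> \<open>they supercommute\<close>
         (\<forall>m\<in>\<int>. \<forall>n\<in>\<int>. opcomm (L m) (Jb n) = (\<lambda>x. 0) \<and> opcomm (J m) (Lb n) = (\<lambda>x. 0) \<and>
                          opcomm (J m) (Jb n) = (\<lambda>x. 0)) \<and>
         (\<forall>m\<in>\<int>. \<forall>r. half_int r \<longrightarrow>
            (\<forall>G\<in>{Gbp r, Gbm r}. opcomm (L m) G = (\<lambda>x. 0) \<and> opcomm (J m) G = (\<lambda>x. 0)) \<and>
            (\<forall>G\<in>{Gp r, Gm r}. opcomm G (Lb m) = (\<lambda>x. 0) \<and> opcomm G (Jb m) = (\<lambda>x. 0))) \<and>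
         (\<forall>r s. half_int r \<and> half_int s \<longrightarrow>
            (\<forall>G\<in>{Gp r, Gm r}. \<forall>H\<in>{Gbp s, Gbm s}. opacomm G H = (\<lambda>x. 0))) \<and>
         \<comment> \<open>J_0, Jbar_0 semisimple with real eigenvalues; J_0 - Jbar_0 integral and
             exp(pi i (J_0 - Jbar_0)) is the parity operator\<close>
         semisimple_real (J 0) \<and> semisimple_real (Jb 0) \<and>
         (\<forall>p q h hb v. v \<in> Fpq Fh J Jb p q h hb \<and> v \<noteq> 0 \<longrightarrow>
            p - q \<in> \<int> \<and> exp (complex_of_real (pi * (p - q)) * \<i>) = (-1) ^ par h hb))"

end

theory Submission
  imports Defs
begin

lemma cs_zero_left: "0 *\<^sub>C (x::'a::cvs) = 0"
proof -
  have "0 *\<^sub>C x = 0 *\<^sub>C x + 0 *\<^sub>C x" by (metis add_0 cscale_add_left)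
  then show ?thesis by simp
qed

lemma cs_zero_right: "a *\<^sub>C (0::'a::cvs) = 0"
proof -
  have "a *\<^sub>C (0::'a) = a *\<^sub>C 0 + a *\<^sub>C 0" by (metis add_0 cscale_add_right)
  then show ?thesis by simp
qed

lemma cs_sum: "finite A \<Longrightarrow> a *\<^sub>C (\<Sum>x\<in>A. f x) = (\<Sum>x\<in>A. a *\<^sub>C (f x :: 'a::cvs))"
  by (induction A rule: finite_induct) (auto simp: cs_zero_right cscale_add_right)

lemma clin_zero: "clin f \<Longrightarrow> f 0 = 0"
  unfolding clin_def by (metis add_0 add_cancel_right_right)

lemma clin_add: "clin f \<Longrightarrow> f (x + y) = f x + f y"
  unfolding clin_def by blast

lemma clin_scale: "clin f \<Longrightarrow> f (a *\<^sub>C x) = a *\<^sub>C f x"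
  unfolding clin_def by blast

lemma clin_sum: assumes "clin f" shows "finite A \<Longrightarrow> f (\<Sum>x\<in>A. g x) = (\<Sum>x\<in>A. f (g x))"
  by (induction A rule: finite_induct) (auto simp: clin_zero[OF assms] clin_add[OF assms])

lemma clin_minus: "clin f \<Longrightarrow> f (x - y) = f x - f y"
  by (metis add_diff_cancel clin_add diff_add_cancel)

lemma N2_anti: "N2_NS c L J Gp Gm \<Longrightarrow> half_int r \<Longrightarrow> half_int s \<Longrightarrow>
  Gp r (Gm s x) + Gm s (Gp r x) = L (r + s) x + complex_of_real ((r - s) / 2) *\<^sub>C J (r + s) x
            + ((if r + s = 0 then c / 6 * complex_of_real (r\<^sup>2 - 1/4) else 0) *\<^sub>C x)"
  unfolding N2_NS_def opacomm_def by (simp add: fun_eq_iff)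

theorem lemma2p7:
  fixes Fh :: "real \<Rightarrow> real \<Rightarrow> 'v::cvs set"
    and md :: "'v \<Rightarrow> real \<Rightarrow> real \<Rightarrow> 'v \<Rightarrow> 'v"
    and vac \<omega> \<omega>b \<tau>p \<tau>m j \<tau>bp \<tau>bm jb :: 'v
    and c cb :: complex
    and r s :: real
    and P :: "(real \<times> real) set"
    and vc :: "real \<times> real \<Rightarrow> 'v"
    and v :: 'v
  assumes F: "N22_FVOSA Fh md vac \<omega> \<omega>b c cb \<tau>p \<tau>m j \<tau>bp \<tau>bm jb"
    and c_nz: "c \<noteq> 0" and cb_nz: "cb \<noteq> 0"
    and P_fin: "finite P"
    and comps: "\<forall>pq\<in>P. vc pq \<in> Fpq Fh (\<lambda>n. md j n (-1)) (\<lambda>n. md jb (-1) n)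
                          (fst pq) (snd pq) (r + fst pq / 2) (s + snd pq / 2)"
    and v_def: "v = (\<Sum>pq\<in>P. vc pq)"
    and v_nz: "v \<noteq> 0"
    and closed: "md \<tau>p 0 (-1) v + md \<tau>bp (-1) 0 v = 0"
    and rs: "(r, s) \<noteq> (0, 0)"
  shows "\<exists>w. md \<tau>p 0 (-1) w + md \<tau>bp (-1) 0 w = v"
proof -
  have FV: "full_VOSA Fh md vac" using F unfolding N22_FVOSA_def Let_def by (elim conjE) assumption
  have lin0: "\<forall>a r s. clin (md a r s)" using FV unfolding full_VOSA_def by (elim conjE) assumption
  have lin: "\<And>a r s. clin (md a r s)" using lin0 by blast
  have N1: "N2_NS c (\<lambda>n. md \<omega> (n + 1) (-1)) (\<lambda>n. md j n (-1))
             (\<lambda>r. md \<tau>p (r + 1/2) (-1)) (\<lambda>r. md \<tau>m (r + 1/2) (-1))"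
    using F unfolding N22_FVOSA_def Let_def by (elim conjE) assumption
  have N2: "N2_NS cb (\<lambda>n. md \<omega>b (-1) (n + 1)) (\<lambda>n. md jb (-1) n)
             (\<lambda>r. md \<tau>bp (-1) (r + 1/2)) (\<lambda>r. md \<tau>bm (-1) (r + 1/2))"
    using F unfolding N22_FVOSA_def Let_def by (elim conjE) assumption
  have L0: "\<forall>h hb v. v \<in> Fh h hb \<longrightarrow> md \<omega> (0 + 1) (-1) v = complex_of_real h *\<^sub>C v
              \<and> md \<omega>b (-1) (0 + 1) v = complex_of_real hb *\<^sub>C v"
    using F unfolding N22_FVOSA_def Let_def by (elim conjE) assumption
  have X: "\<forall>r s. half_int r \<and> half_int s \<longrightarrow>
            (\<forall>G\<in>{md \<tau>p (r + 1/2) (-1), md \<tau>m (r + 1/2) (-1)}.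
             \<forall>H\<in>{md \<tau>bp (-1) (s + 1/2), md \<tau>bm (-1) (s + 1/2)}. opacomm G H = (\<lambda>x. 0))"
    using F unfolding N22_FVOSA_def Let_def by (elim conjE) assumption
  have hm: "half_int (-1/2)" "half_int (1/2)" unfolding half_int_def by simp_all
  have A1: "\<And>x. md \<tau>p 0 (-1) (md \<tau>m 1 (-1) x) + md \<tau>m 1 (-1) (md \<tau>p 0 (-1) x)
      = md \<omega> 1 (-1) x + complex_of_real (-1/2) *\<^sub>C md j 0 (-1) x"
    using N2_anti[OF N1 hm(1) hm(2)] by (simp add: cs_zero_left power2_eq_square)
  have A2: "\<And>x. md \<tau>bp (-1) 0 (md \<tau>bm (-1) 1 x) + md \<tau>bm (-1) 1 (md \<tau>bp (-1) 0 x)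
      = md \<omega>b (-1) 1 x + complex_of_real (-1/2) *\<^sub>C md jb (-1) 0 x"
    using N2_anti[OF N2 hm(1) hm(2)] by (simp add: cs_zero_left power2_eq_square)
  have A3: "\<And>x. md \<tau>m 1 (-1) (md \<tau>bp (-1) 0 x) + md \<tau>bp (-1) 0 (md \<tau>m 1 (-1) x) = 0"
  proof -
    fix x
    have "opacomm (md \<tau>m (1/2 + 1/2) (-1)) (md \<tau>bp (-1) (-1/2 + 1/2)) = (\<lambda>x. 0)"
      using X hm by blast
    then show "?thesis x" by (simp add: opacomm_def fun_eq_iff)
  qed
  have A4: "\<And>x. md \<tau>p 0 (-1) (md \<tau>bm (-1) 1 x) + md \<tau>bm (-1) 1 (md \<tau>p 0 (-1) x) = 0"
  proof -
    fix x
    have "opacomm (md \<tau>p (-1/2 + 1/2) (-1)) (md \<tau>bm (-1) (1/2 + 1/2)) = (\<lambda>x. 0)"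
      using X hm by blast
    then show "?thesis x" by (simp add: opacomm_def fun_eq_iff)
  qed
  have E1: "md \<omega> 1 (-1) v + complex_of_real (-1/2) *\<^sub>C md j 0 (-1) v = complex_of_real r *\<^sub>C v"
  proof -
    have e: "md \<omega> 1 (-1) (vc pq) + complex_of_real (-1/2) *\<^sub>C md j 0 (-1) (vc pq) = complex_of_real r *\<^sub>C vc pq"
      if "pq \<in> P" for pq
    proof -
      have m: "vc pq \<in> Fh (r + fst pq/2) (s + snd pq/2)"
        and J: "md j 0 (-1) (vc pq) = complex_of_real (fst pq) *\<^sub>C vc pq"
        using comps that unfolding Fpq_def by auto
      have L: "md \<omega> 1 (-1) (vc pq) = complex_of_real (r + fst pq/2) *\<^sub>C vc pq" using L0 m by simp
      have "md \<omega> 1 (-1) (vc pq) + complex_of_real (-1/2) *\<^sub>C md j 0 (-1) (vc pq)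
         = (complex_of_real (r + fst pq/2) + complex_of_real (-1/2) * complex_of_real (fst pq)) *\<^sub>C vc pq"
        by (simp only: L J cscale_add_left cscale_cscale)
      also have "complex_of_real (r + fst pq/2) + complex_of_real (-1/2) * complex_of_real (fst pq) = complex_of_real r"
        by simp
      finally show ?thesis .
    qed
    have "md \<omega> 1 (-1) v + complex_of_real (-1/2) *\<^sub>C md j 0 (-1) v
       = (\<Sum>pq\<in>P. md \<omega> 1 (-1) (vc pq) + complex_of_real (-1/2) *\<^sub>C md j 0 (-1) (vc pq))"
      unfolding v_def by (simp add: clin_sum[OF lin] P_fin cs_sum sum.distrib)
    also have "\<dots> = (\<Sum>pq\<in>P. complex_of_real r *\<^sub>C vc pq)" using e by simp
    also have "\<dots> = complex_of_real r *\<^sub>C v" unfolding v_def by (simp add: cs_sum P_fin)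
    finally show ?thesis .
  qed
  have E2: "md \<omega>b (-1) 1 v + complex_of_real (-1/2) *\<^sub>C md jb (-1) 0 v = complex_of_real s *\<^sub>C v"
  proof -
    have e: "md \<omega>b (-1) 1 (vc pq) + complex_of_real (-1/2) *\<^sub>C md jb (-1) 0 (vc pq) = complex_of_real s *\<^sub>C vc pq"
      if "pq \<in> P" for pq
    proof -
      have m: "vc pq \<in> Fh (r + fst pq/2) (s + snd pq/2)"
        and J: "md jb (-1) 0 (vc pq) = complex_of_real (snd pq) *\<^sub>C vc pq"
        using comps that unfolding Fpq_def by auto
      have L: "md \<omega>b (-1) 1 (vc pq) = complex_of_real (s + snd pq/2) *\<^sub>C vc pq" using L0 m by simp
      have "md \<omega>b (-1) 1 (vc pq) + complex_of_real (-1/2) *\<^sub>C md jb (-1) 0 (vc pq)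
         = (complex_of_real (s + snd pq/2) + complex_of_real (-1/2) * complex_of_real (snd pq)) *\<^sub>C vc pq"
        by (simp only: L J cscale_add_left cscale_cscale)
      also have "complex_of_real (s + snd pq/2) + complex_of_real (-1/2) * complex_of_real (snd pq) = complex_of_real s"
        by simp
      finally show ?thesis .
    qed
    have "md \<omega>b (-1) 1 v + complex_of_real (-1/2) *\<^sub>C md jb (-1) 0 v
       = (\<Sum>pq\<in>P. md \<omega>b (-1) 1 (vc pq) + complex_of_real (-1/2) *\<^sub>C md jb (-1) 0 (vc pq))"
      unfolding v_def by (simp add: clin_sum[OF lin] P_fin cs_sum sum.distrib)
    also have "\<dots> = (\<Sum>pq\<in>P. complex_of_real s *\<^sub>C vc pq)" using e by simp
    also have "\<dots> = complex_of_real s *\<^sub>C v" unfolding v_def by (simp add: cs_sum P_fin)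
    finally show ?thesis .
  qed
  have Z1: "md \<tau>m 1 (-1) (md \<tau>p 0 (-1) v) + md \<tau>m 1 (-1) (md \<tau>bp (-1) 0 v) = 0"
    using closed clin_zero[OF lin] clin_add[OF lin] by metis
  have Z2: "md \<tau>bm (-1) 1 (md \<tau>p 0 (-1) v) + md \<tau>bm (-1) 1 (md \<tau>bp (-1) 0 v) = 0"
    using closed clin_zero[OF lin] clin_add[OF lin] by metis
  have D1: "md \<tau>p 0 (-1) (md \<tau>m 1 (-1) v) + md \<tau>bp (-1) 0 (md \<tau>m 1 (-1) v) = complex_of_real r *\<^sub>C v"
  proof -
    have a: "md \<tau>p 0 (-1) (md \<tau>m 1 (-1) v) = complex_of_real r *\<^sub>C v - md \<tau>m 1 (-1) (md \<tau>p 0 (-1) v)"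
      using A1[of v] E1 by (simp add: eq_diff_eq)
    have b: "md \<tau>bp (-1) 0 (md \<tau>m 1 (-1) v) = - md \<tau>m 1 (-1) (md \<tau>bp (-1) 0 v)"
      using A3[of v] by (simp add: eq_neg_iff_add_eq_0 add.commute)
    show ?thesis using Z1 unfolding a b by (simp add: algebra_simps)
  qed
  have D2: "md \<tau>p 0 (-1) (md \<tau>bm (-1) 1 v) + md \<tau>bp (-1) 0 (md \<tau>bm (-1) 1 v) = complex_of_real s *\<^sub>C v"
  proof -
    have a: "md \<tau>bp (-1) 0 (md \<tau>bm (-1) 1 v) = complex_of_real s *\<^sub>C v - md \<tau>bm (-1) 1 (md \<tau>bp (-1) 0 v)"
      using A2[of v] E2 by (simp add: eq_diff_eq)
    have b: "md \<tau>p 0 (-1) (md \<tau>bm (-1) 1 v) = - md \<tau>bm (-1) 1 (md \<tau>p 0 (-1) v)"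
      using A4[of v] by (simp add: eq_neg_iff_add_eq_0 add.commute)
    show ?thesis using Z2 unfolding a b by (simp add: algebra_simps)
  qed
  define k where "k = complex_of_real (1 / (r\<^sup>2 + s\<^sup>2))"
  define w where "w = k *\<^sub>C (complex_of_real r *\<^sub>C md \<tau>m 1 (-1) v + complex_of_real s *\<^sub>C md \<tau>bm (-1) 1 v)"
  have pos: "r\<^sup>2 + s\<^sup>2 \<noteq> 0" using rs by (simp add: sum_power2_eq_zero_iff)
  have "md \<tau>p 0 (-1) w + md \<tau>bp (-1) 0 w
      = k *\<^sub>C (complex_of_real r *\<^sub>C (md \<tau>p 0 (-1) (md \<tau>m 1 (-1) v) + md \<tau>bp (-1) 0 (md \<tau>m 1 (-1) v))
             + complex_of_real s *\<^sub>C (md \<tau>p 0 (-1) (md \<tau>bm (-1) 1 v) + md \<tau>bp (-1) 0 (md \<tau>bm (-1) 1 v)))"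
    unfolding w_def by (simp add: clin_add[OF lin] clin_scale[OF lin] cscale_add_right algebra_simps)
  also have "\<dots> = (k * (complex_of_real r * complex_of_real r) + k * (complex_of_real s * complex_of_real s)) *\<^sub>C v"
    by (simp add: D1 D2 cscale_cscale cscale_add_left cscale_add_right)
  also have "k * (complex_of_real r * complex_of_real r) + k * (complex_of_real s * complex_of_real s) = 1"
  proof -
    have "k * (complex_of_real r * complex_of_real r) + k * (complex_of_real s * complex_of_real s)
        = complex_of_real ((r * r + s * s) / (r\<^sup>2 + s\<^sup>2))" unfolding k_def by (simp add: add_divide_distrib)
    also have "\<dots> = 1" using pos by (simp add: power2_eq_square)
    finally show ?thesis .
  qed
  finally show ?thesis by (auto simp: cscale_one)
qed

end
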